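(* Let $k=4$, $p\in\mathbb{S}^n$, $R\in(0,\pi/2)$, $B_R=\{q:\mathbf{d}_p(q)\le R\}$, $y\in\partial B_R$, and $\gamma:[R,\pi]\to\mathbb{S}^n$ the unit-speed minimizing geodesic from $y$ to $-p$ with $\mathbf{d}_p(\gamma(s))=s$. Define on $B_R\setminus\{y\}$ \[Z=\Psi_y+\int_R^\pi h(s)\Psi_{\gamma(s)}\,ds,\qquad h(s):=\frac{\cos R}{\sin^2R}\sin s.\] Then at every point of $\partial B_R\setminus\{y\}$, \[-3\tan R\,\langle Z,\nabla\mathbf{d}_p\rangle=1+\int_R^\pi h(s)\,ds.\]
   Context: $\mathbb{S}^n$ is the unit round sphere with Levi-Civita connection $\nabla$; $\mathbf{d}_q$ is geodesic distance from $q$. With $k=4$: $I_k(r)=\int_0^r\sin^{k-1}s\,ds$, $\varphi(t)=I_k(t)\sin^{1-k}t$ for $t\in(0,\pi)$, $\varphi(0)=0$, $\Phi_q=(\varphi\circ\mathbf{d}_q)\nabla\mathbf{d}_q$ on $\mathbb{S}^n\setminus\{-q\}$, and $\Psi_q:=\Phi_{-q}$ on $\mathbb{S}^n\setminus\{q\}$. *)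

theory Defs
  imports "HOL-Analysis.Analysis"
begin

text \<open>The unit round sphere S^n is modelled as sphere 0 1 in a Euclidean space 'a
 (DIM('a) = n+1). Geodesic distance on the unit sphere.\<close>
definition sdist :: "'a::euclidean_space \<Rightarrow> 'a \<Rightarrow> real" where
  "sdist q x = arccos (q \<bullet> x)"

text \<open>Riemannian gradient (w.r.t. the induced round metric) of f at x on the sphere:
 the tangent vector v at x with d f_x (w) = v . w on tangent vectors.\<close>
definition sgrad :: "('a::euclidean_space \<Rightarrow> real) \<Rightarrow> 'a \<Rightarrow> 'a" where
  "sgrad f x = (SOME v. v \<bullet> x = 0 \<and>
      (f has_derivative (\<lambda>w. v \<bullet> w)) (at x within sphere 0 1))"

definition Ik :: "nat \<Rightarrow> real \<Rightarrow> real" where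
  "Ik k r = integral {0..r} (\<lambda>s. sin s ^ (k - 1))"

definition phik :: "nat \<Rightarrow> real \<Rightarrow> real" where
  "phik k t = (if t = 0 then 0 else Ik k t / sin t ^ (k - 1))"

definition Phi :: "'a::euclidean_space \<Rightarrow> 'a \<Rightarrow> 'a" where
  "Phi q x = phik 4 (sdist q x) *\<^sub>R sgrad (sdist q) x"

definition Psi :: "'a::euclidean_space \<Rightarrow> 'a \<Rightarrow> 'a" where
  "Psi q x = Phi (- q) x"

end

theory Submission
  imports Defs
begin


lemma deriv_aux:
  fixes q x :: "'a::euclidean_space"
  assumes q: "norm q = 1" and x: "norm x = 1" and c: "\<bar>q \<bullet> x\<bar> < 1"
  shows "((\<lambda>z. arccos (q \<bullet> z / sqrt (z \<bullet> z))) has_derivative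
     (\<lambda>w. (- (1 / sqrt (1 - (q\<bullet>x)\<^sup>2)) *\<^sub>R (q - (q\<bullet>x) *\<^sub>R x)) \<bullet> w)) (at x)"
proof -
  have xx: "x \<bullet> x = 1" using x by (simp add: dot_square_norm)
  have s: "sqrt (1 - (q\<bullet>x)\<^sup>2) > 0" using c by (simp add: abs_square_less_1)
  have d1: "((\<lambda>z. q \<bullet> z / sqrt (z \<bullet> z)) has_derivative (\<lambda>w. (q - (q\<bullet>x) *\<^sub>R x) \<bullet> w)) (at x)"
    apply (rule derivative_eq_intros refl | simp add: xx)+
    apply (auto simp: inner_diff_left inner_commute algebra_simps)
    done
  have d2: "(arccos has_real_derivative inverse (- sqrt (1 - (q\<bullet>x)\<^sup>2))) (at (q \<bullet> x / sqrt (x \<bullet> x)))"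
    using DERIV_arccos[of "q \<bullet> x"] c by (simp add: xx)
  show ?thesis
    using has_derivative_compose[OF d1 d2[unfolded has_field_derivative_def]]
    apply (simp add: o_def)
    apply (erule has_derivative_eq_rhs)
    apply (rule ext)
    apply (simp add: inner_diff_left divide_simps)
    done
qed


lemma sgrad_unique:
  fixes x v v' :: "'a::euclidean_space"
  assumes x: "norm x = 1" and vx: "v \<bullet> x = 0" and vx': "v' \<bullet> x = 0"
    and d: "(f has_derivative (\<lambda>w. v \<bullet> w)) (at x within sphere 0 1)"
    and d': "(f has_derivative (\<lambda>w. v' \<bullet> w)) (at x within sphere 0 1)"
  shows "v = v'"
proof (rule ccontr)
  assume ne: "v \<noteq> v'"
  define dd where "dd = v - v'"
  have ddn: "norm dd > 0" using ne by (simp add: dd_def)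
  have ddx: "dd \<bullet> x = 0" using vx vx' by (simp add: dd_def inner_diff_left)
  define e where "e = (1 / norm dd) *\<^sub>R dd"
  have ee: "e \<bullet> e = 1" using ddn by (simp add: e_def dot_square_norm)
  have ex: "e \<bullet> x = 0" using ddx by (simp add: e_def)
  have xx: "x \<bullet> x = 1" using x by (simp add: dot_square_norm)
  have xe: "x \<bullet> e = 0" using ex by (simp add: inner_commute)
  have lim: "((\<lambda>z. (1 / norm (z - x)) *\<^sub>R (dd \<bullet> (z - x))) \<longlongrightarrow> 0) (at x within sphere 0 1)"
  proof -
    have "((\<lambda>z. (1 / norm (z - x)) *\<^sub>R (f z - (f x + v' \<bullet> (z - x))) - (1 / norm (z - x)) *\<^sub>R (f z - (f x + v \<bullet> (z - x)))) \<longlongrightarrow> 0 - 0) (at x within sphere 0 1)"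
      using d d' unfolding has_derivative_within by (intro tendsto_diff) auto
    moreover have "(\<lambda>z. (1 / norm (z - x)) *\<^sub>R (f z - (f x + v' \<bullet> (z - x))) - (1 / norm (z - x)) *\<^sub>R (f z - (f x + v \<bullet> (z - x))))
       = (\<lambda>z. (1 / norm (z - x)) *\<^sub>R (dd \<bullet> (z - x)))"
    proof
      fix z
      have "f z - (f x + v' \<bullet> (z - x)) - (f z - (f x + v \<bullet> (z - x))) = dd \<bullet> (z - x)"
        by (simp add: dd_def inner_diff_left)
      then show "(1 / norm (z - x)) *\<^sub>R (f z - (f x + v' \<bullet> (z - x))) - (1 / norm (z - x)) *\<^sub>R (f z - (f x + v \<bullet> (z - x)))
       = (1 / norm (z - x)) *\<^sub>R (dd \<bullet> (z - x))"
        by (metis scaleR_diff_right)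
    qed
    ultimately show ?thesis by simp
  qed
  then obtain del where del: "del > 0"
    and H: "\<And>z. z \<in> sphere 0 1 \<Longrightarrow> 0 < dist z x \<Longrightarrow> dist z x < del \<Longrightarrow>
         dist ((1 / norm (z - x)) *\<^sub>R (dd \<bullet> (z - x))) 0 < norm dd / 2"
    unfolding Lim_within using ddn by (metis half_gt_zero)
  define th where "th = min (del / 4) (pi / 3)"
  have th0: "0 < th" using del by (simp add: th_def)
  have th1: "th \<le> pi / 3" "th \<le> del / 4" by (auto simp: th_def)
  have sth: "0 < sin th" using th0 th1 by (intro sin_gt_zero) auto
  have sthle: "sin th \<le> th" using th0 sin_x_le_x by auto
  have cth: "cos th \<ge> 1 / 2"
  proof -
    have "cos (pi / 3) \<le> cos th" using th0 th1 by (intro cos_monotone_0_pi_le) auto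
    then show ?thesis by (simp add: cos_60)
  qed
  define z where "z = cos (2 * th) *\<^sub>R x + sin (2 * th) *\<^sub>R e"
  have zz: "z \<bullet> z = 1"
    by (simp add: z_def inner_add_left inner_add_right xx ee ex xe
        flip: power2_eq_square)
  have zs: "z \<in> sphere 0 1" using zz by (simp add: norm_eq_sqrt_inner)
  have nz2: "(norm (z - x))\<^sup>2 = (2 * sin th)\<^sup>2"
  proof -
    have "(norm (z - x))\<^sup>2 = (z - x) \<bullet> (z - x)" by (simp add: dot_square_norm)
    also have "\<dots> = 2 - 2 * cos (2 * th)"
      by (simp add: z_def inner_add_left inner_add_right inner_diff_left inner_diff_right xx ee ex
          xe algebra_simps flip: power2_eq_square)
    also have "\<dots> = (2 * sin th)\<^sup>2" by (simp add: cos_double_sin power_mult_distrib)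
    finally show ?thesis .
  qed
  have nz: "norm (z - x) = 2 * sin th"
    using nz2 sth by (metis norm_ge_zero power2_eq_imp_eq mult_pos_pos zero_less_numeral less_le)
  have dz: "dd \<bullet> (z - x) = norm dd * (2 * sin th * cos th)"
  proof -
    have "dd = norm dd *\<^sub>R e" using ddn by (simp add: e_def)
    then have "dd \<bullet> (z - x) = norm dd * (e \<bullet> (z - x))" by (metis inner_scaleR_left)
    also have "e \<bullet> (z - x) = sin (2 * th)"
      by (simp add: z_def inner_diff_right inner_add_right ex ee)
    finally show ?thesis by (simp add: sin_double)
  qed
  have "dist ((1 / norm (z - x)) *\<^sub>R (dd \<bullet> (z - x))) 0 < norm dd / 2"
    using H[OF zs] nz sth th1 sthle by (simp add: dist_norm)
  moreover have "dist ((1 / norm (z - x)) *\<^sub>R (dd \<bullet> (z - x))) 0 = norm dd * cos th"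
    using nz dz sth cth by (simp add: dist_norm)
  moreover have "norm dd * (1/2) \<le> norm dd * cos th" using cth ddn by (intro mult_left_mono) auto
  ultimately show False by linarith
qed


lemma inner1_eq:
  fixes q x :: "'a::euclidean_space"
  assumes "norm q = 1" "norm x = 1" "q \<bullet> x = 1" shows "x = q"
proof -
  have "x \<bullet> x = 1" "q \<bullet> q = 1" using assms by (simp_all add: dot_square_norm)
  then have "(norm (x - q))\<^sup>2 = 0"
    using assms by (simp add: power2_norm_eq_inner inner_diff_left inner_diff_right inner_commute
        flip: dot_square_norm)
  then show ?thesis by simp
qed

lemma inner_abs_le1:
  fixes q x :: "'a::euclidean_space"
  assumes "norm q = 1" "norm x = 1" shows "\<bar>q \<bullet> x\<bar> \<le> 1"
  using Cauchy_Schwarz_ineq2[of q x] assms by simp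

lemma sgrad_sdist:
  fixes q x :: "'a::euclidean_space"
  assumes q: "norm q = 1" and x: "norm x = 1" and c: "\<bar>q \<bullet> x\<bar> < 1"
  shows "sgrad (sdist q) x = - (1 / sqrt (1 - (q\<bullet>x)\<^sup>2)) *\<^sub>R (q - (q\<bullet>x) *\<^sub>R x)"
proof -
  define v where "v = - (1 / sqrt (1 - (q\<bullet>x)\<^sup>2)) *\<^sub>R (q - (q\<bullet>x) *\<^sub>R x)"
  have xx: "x \<bullet> x = 1" using x by (simp add: dot_square_norm)
  have vx: "v \<bullet> x = 0" by (simp add: v_def inner_diff_left xx)
  have D: "(sdist q has_derivative (\<lambda>w. v \<bullet> w)) (at x within sphere 0 1)"
  proof (rule has_derivative_transform_within[where d=1])
    show "((\<lambda>z. arccos (q \<bullet> z / sqrt (z \<bullet> z))) has_derivative (\<lambda>w. v \<bullet> w)) (at x within sphere 0 1)"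
      using deriv_aux[OF q x c] unfolding v_def by (rule has_derivative_at_withinI)
    show "x \<in> sphere 0 1" using x by simp
    fix z :: 'a assume "z \<in> sphere 0 1"
    then have "z \<bullet> z = 1" by (simp add: dot_square_norm)
    then show "arccos (q \<bullet> z / sqrt (z \<bullet> z)) = sdist q z" by (simp add: sdist_def)
  qed simp
  define P where "P = (\<lambda>v. v \<bullet> x = 0 \<and> (sdist q has_derivative (\<lambda>w. v \<bullet> w)) (at x within sphere 0 1))"
  have Pv: "P v" using vx D by (simp add: P_def)
  then have "P (SOME v. P v)" by (rule someI)
  then have "(SOME v. P v) = v"
    using Pv unfolding P_def by (intro sgrad_unique[OF x]) auto
  then show ?thesis by (simp add: sgrad_def P_def v_def)
qed

lemma Ik4:
  assumes "0 \<le> t" shows "Ik 4 t = 2/3 - cos t + cos t ^ 3 / 3"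
proof -
  have "((\<lambda>s. sin s ^ 3) has_integral ((- cos t + cos t ^ 3 / 3) - (- cos 0 + cos 0 ^ 3 / 3))) {0..t}"
  proof (rule fundamental_theorem_of_calculus[OF assms])
    fix s :: real assume "s \<in> {0..t}"
    have "((\<lambda>s. - cos s + cos s ^ 3 / 3) has_real_derivative sin s ^ 3) (at s)"
      apply (rule derivative_eq_intros refl | simp)+
      using sin_cos_squared_add[of s] apply algebra
      done
    then show "((\<lambda>s. - cos s + cos s ^ 3 / 3) has_vector_derivative sin s ^ 3) (at s within {0..t})"
      by (simp add: has_real_derivative_iff_has_vector_derivative[symmetric] has_field_derivative_at_within)
  qed
  then show ?thesis unfolding Ik_def by (simp add: integral_unique)
qed

lemma Psi_formula:
  fixes q x :: "'a::euclidean_space"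
  assumes q: "norm q = 1" and x: "norm x = 1" and xq: "x \<noteq> q"
  shows "Psi q x = ((2 - q\<bullet>x) / (3 * (1 - q\<bullet>x)\<^sup>2)) *\<^sub>R (q - (q\<bullet>x) *\<^sub>R x)"
proof (cases "x = - q")
  case True
  have qq: "q \<bullet> q = 1" using q by (simp add: dot_square_norm)
  show ?thesis using True by (simp add: Psi_def Phi_def sdist_def phik_def qq)
next
  case False
  define c where "c = q \<bullet> x"
  have c1: "c \<noteq> 1" using inner1_eq[OF q x] xq by (auto simp: c_def)
  have c2: "c \<noteq> -1" using inner1_eq[of "-q" x] q x False by (auto simp: c_def)
  have c: "\<bar>c\<bar> < 1" using inner_abs_le1[OF q x] c1 c2 unfolding c_def by linarith
  have mq: "norm (-q) = 1" using q by simp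
  have c': "\<bar>(-q) \<bullet> x\<bar> < 1" using c by (simp add: c_def)
  define t where "t = arccos (- c)"
  have sd: "sdist (-q) x = t" by (simp add: sdist_def t_def c_def)
  have t0: "t \<noteq> 0" proof
    assume "t = 0"
    then have "cos t = 1" by simp
    moreover have "cos t = - c" unfolding t_def using c by (intro cos_arccos) auto
    ultimately show False using c2 by simp
  qed
  have t00: "0 \<le> t" unfolding t_def using c by (intro arccos_lbound) auto
  have ct: "cos t = - c" unfolding t_def using c by (intro cos_arccos) auto
  have st: "sin t = sqrt (1 - c\<^sup>2)" unfolding t_def using c by (subst sin_arccos) auto
  have pos: "1 - c\<^sup>2 > 0" using c by (simp add: abs_square_less_1)
  have sg: "sgrad (sdist (-q)) x = (1 / sqrt (1 - c\<^sup>2)) *\<^sub>R (q - c *\<^sub>R x)"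
    using sgrad_sdist[OF mq x c'] by (simp add: c_def algebra_simps)
  have sq4: "sqrt (1 - c\<^sup>2) ^ 3 * sqrt (1 - c\<^sup>2) = (1 - c\<^sup>2)\<^sup>2"
    using pos by (simp add: power3_eq_cube power2_eq_square real_sqrt_mult[symmetric] mult.assoc)
  have "phik 4 t * (1 / sqrt (1 - c\<^sup>2)) = (2/3 + c - c^3/3) / (1 - c\<^sup>2)\<^sup>2"
    using t0 t00 by (simp add: phik_def Ik4 ct st sq4[symmetric])
  also have "\<dots> = (2 - c) / (3 * (1 - c)\<^sup>2)"
  proof -
    have e1: "2/3 + c - c^3/3 = (2 - c) * (1 + c)\<^sup>2 / 3" by (simp add: field_simps power2_eq_square power3_eq_cube)
    have e2: "(1 - c\<^sup>2)\<^sup>2 = (1 - c)\<^sup>2 * (1 + c)\<^sup>2" by (simp add: power2_eq_square algebra_simps)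
    have "1 + c \<noteq> 0" using c2 by auto
    then have "(1 + c)\<^sup>2 \<noteq> 0" by simp
    then have "((2 - c) * (1 + c)\<^sup>2) / ((3 * (1 - c)\<^sup>2) * (1 + c)\<^sup>2) = (2 - c) / (3 * (1 - c)\<^sup>2)"
      by (rule mult_divide_mult_cancel_right)
    then show ?thesis unfolding e1 e2 by (simp add: mult.assoc)
  qed
  finally have "phik 4 t * (1 / sqrt (1 - c\<^sup>2)) = (2 - c) / (3 * (1 - c)\<^sup>2)" .
  then show ?thesis by (simp add: Psi_def Phi_def sd sg c_def[symmetric])
qed


lemma antider_poly:
  fixes A B e f :: real
  assumes "e\<^sup>2 + f\<^sup>2 = 1"
  shows "A*B*(-2*(-(A*e+B*f)*(1-(A*e+B*f)) + (B*e-A*f)\<^sup>2) - (2-(A\<^sup>2+B\<^sup>2))*(A*e+B*f)*(1-(A*e+B*f))\<^sup>2)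
     + (B\<^sup>2 - A\<^sup>2 + A\<^sup>2*(A\<^sup>2+B\<^sup>2))*((B*e-A*f) - (B*e-A*f)*(1-(A*e+B*f))\<^sup>2)
     = (A\<^sup>2+B\<^sup>2)\<^sup>2 * f * (e - A*(A*e+B*f)) * (2 - (A*e+B*f))"
  using assms by algebra


lemma final_alg:
  fixes A B e f :: real
  assumes u: "1 - (A * e + B * f) \<noteq> 0" and D: "A\<^sup>2+B\<^sup>2 \<noteq> 0" and ef: "f\<^sup>2 + e\<^sup>2 = 1"
  shows "((((e * A * 2 + f * B * 2) * (1 - (A * e + B * f)) -
        (2 * (A * f) - 2 * (B * e)) * (f * A - e * B)) /
       ((1 - (A * e + B * f)) * (1 - (A * e + B * f))) +
       (- (f * B) - e * A) * (2 - (A\<^sup>2 + B\<^sup>2))) * (A * B) +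
      ((e * B - f * A) / ((1 - (A * e + B * f)) * (1 - (A * e + B * f))) -
       (e * B - f * A)) * (B\<^sup>2 - A\<^sup>2 + A\<^sup>2 * (A\<^sup>2 + B\<^sup>2))) *
     (A\<^sup>2 + B\<^sup>2)\<^sup>2 / (A\<^sup>2 + B\<^sup>2) ^ 4 =
     f * (e - A * (A * e + B * f)) * (2 - (A * e + B * f)) / (1 - (A * e + B * f))\<^sup>2"
proof -
  have fr: "\<And>X Y Z K u D M :: real. u \<noteq> 0 \<Longrightarrow> D \<noteq> 0 \<Longrightarrow>
     ((X / (u*u) + Y) * M + (Z/(u*u) - Z) * K) * D\<^sup>2 / D^4 = (M*(X + Y*u\<^sup>2) + K*(Z - Z*u\<^sup>2)) / (u\<^sup>2 * D\<^sup>2)"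
    by (simp add: field_simps power2_eq_square power4_eq_xxxx)
  have N: "A * B * (((e * A * 2 + f * B * 2) * (1 - (A * e + B * f)) -
        (2 * (A * f) - 2 * (B * e)) * (f * A - e * B)) + ((- (f * B) - e * A) * (2 - (A\<^sup>2 + B\<^sup>2))) * (1 - (A * e + B * f))\<^sup>2)
      + (B\<^sup>2 - A\<^sup>2 + A\<^sup>2 * (A\<^sup>2 + B\<^sup>2)) * ((e * B - f * A) - (e * B - f * A) * (1 - (A * e + B * f))\<^sup>2)
     = (A\<^sup>2+B\<^sup>2)\<^sup>2 * (f * (e - A*(A*e+B*f)) * (2 - (A*e+B*f)))"
    using ef by algebra
  show ?thesis
    apply (subst fr[OF u D])
    apply (subst N)
    using D by simp
qed

definition cc :: "real \<Rightarrow> real \<Rightarrow> real \<Rightarrow> real" where "cc A B s = A*cos s + B* sin s"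
definition FF :: "real \<Rightarrow> real \<Rightarrow> real \<Rightarrow> real" where
  "FF A B s = (A*B*(-2*(B*cos s - A* sin s)/(1-cc A B s) + (2-(A\<^sup>2+B\<^sup>2))*(B*cos s - A* sin s))
     + (B\<^sup>2-A\<^sup>2+A\<^sup>2*(A\<^sup>2+B\<^sup>2))*(1/(1-cc A B s) - cc A B s))/(A\<^sup>2+B\<^sup>2)\<^sup>2"

lemma antider:
  fixes A B s :: real
  assumes D: "A\<^sup>2+B\<^sup>2 > 0" and c1: "cc A B s \<noteq> 1"
  shows "(FF A B has_real_derivative
     (sin s*(cos s - A*cc A B s)*(2-cc A B s)/(1-cc A B s)\<^sup>2)) (at s)"
proof -
  have u: "1 - (A*cos s + B* sin s) \<noteq> 0" using c1 by (simp add: cc_def)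
  have D': "(A\<^sup>2+B\<^sup>2) \<noteq> 0" using D by linarith
  show ?thesis
    unfolding FF_def cc_def
    apply (rule DERIV_cong)
    apply (auto intro!: derivative_eq_intros simp: u)
    using u apply simp
    using u apply simp
    using D apply simp
    using u D' sin_cos_squared_add[of s] apply (rule final_alg)
    done
qed



lemma gen_frac:
  fixes M K a1 a2 p1 p2 q1 q2 u1 u2 D2 T1 T2 :: real
  assumes "u1 \<noteq> 0" "u2 \<noteq> 0" "D2 \<noteq> 0"
    and "M*(a1*u2 + p1*u1*u2) + K*(u2 - q1*u1*u2) - (M*(a2*u1 + p2*u1*u2) + K*(u1 - q2*u1*u2)) = D2*(T1*u1*u2 - T2*u1)"
  shows "(M*(a1/u1 + p1) + K*(1/u1 - q1))/D2 - (M*(a2/u2 + p2) + K*(1/u2 - q2))/D2 = T1 - T2/u2"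
proof -
  have "(M*(a1/u1 + p1) + K*(1/u1 - q1))/D2 - (M*(a2/u2 + p2) + K*(1/u2 - q2))/D2
     = (M*(a1*u2 + p1*u1*u2) + K*(u2 - q1*u1*u2) - (M*(a2*u1 + p2*u1*u2) + K*(u1 - q2*u1*u2))) / (D2*u1*u2)"
    using assms(1-3) by (simp add: field_simps)
  also have "\<dots> = T1 - T2/u2" unfolding assms(4) using assms(1-3) by (simp add: field_simps)
  finally show ?thesis .
qed

lemma endpoint_alg:
  fixes A B S :: real
  assumes AS: "A\<^sup>2 + S\<^sup>2 = 1" and D: "A\<^sup>2 + B\<^sup>2 \<noteq> 0" and A1: "1 + A \<noteq> 0"
    and cy: "1 - (A*A + B*S) \<noteq> 0"
  shows "(A*B*(-2*(B*(-1) - A*0)/(1-(A*(-1)+B*0)) + (2-(A\<^sup>2+B\<^sup>2))*(B*(-1) - A*0))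
     + (B\<^sup>2-A\<^sup>2+A\<^sup>2*(A\<^sup>2+B\<^sup>2))*(1/(1-(A*(-1)+B*0)) - (A*(-1)+B*0)))/(A\<^sup>2+B\<^sup>2)\<^sup>2
   - (A*B*(-2*(B*A - A*S)/(1-(A*A+B*S)) + (2-(A\<^sup>2+B\<^sup>2))*(B*A - A*S))
     + (B\<^sup>2-A\<^sup>2+A\<^sup>2*(A\<^sup>2+B\<^sup>2))*(1/(1-(A*A+B*S)) - (A*A+B*S)))/(A\<^sup>2+B\<^sup>2)\<^sup>2
   = A*(A+1) - S\<^sup>2/(1-(A*A+B*S))"
proof (rule gen_frac)
  show "1 - (A * - 1 + B * 0) \<noteq> 0" using A1 by simp
  show "1 - (A*A + B*S) \<noteq> 0" by fact
  show "(A\<^sup>2+B\<^sup>2)\<^sup>2 \<noteq> 0" using D by simp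
  show "A * B * (- 2 * (B * - 1 - A * 0) * (1 - (A * A + B * S)) + (2 - (A\<^sup>2 + B\<^sup>2)) * (B * - 1 - A * 0) * (1 - (A * - 1 + B * 0)) * (1 - (A * A + B * S))) +
    (B\<^sup>2 - A\<^sup>2 + A\<^sup>2 * (A\<^sup>2 + B\<^sup>2)) * (1 - (A * A + B * S) - (A * - 1 + B * 0) * (1 - (A * - 1 + B * 0)) * (1 - (A * A + B * S))) -
    (A * B * (- 2 * (B * A - A * S) * (1 - (A * - 1 + B * 0)) + (2 - (A\<^sup>2 + B\<^sup>2)) * (B * A - A * S) * (1 - (A * - 1 + B * 0)) * (1 - (A * A + B * S))) +
     (B\<^sup>2 - A\<^sup>2 + A\<^sup>2 * (A\<^sup>2 + B\<^sup>2)) * (1 - (A * - 1 + B * 0) - (A * A + B * S) * (1 - (A * - 1 + B * 0)) * (1 - (A * A + B * S)))) =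
    (A\<^sup>2 + B\<^sup>2)\<^sup>2 * (A * (A + 1) * (1 - (A * - 1 + B * 0)) * (1 - (A * A + B * S)) - S\<^sup>2 * (1 - (A * - 1 + B * 0)))"
    using AS by algebra
qed


lemma final_alg2:
  fixes A S t :: real
  assumes "A \<noteq> 0" "S \<noteq> 0" "1 - t \<noteq> 0"
  shows "- 3 * (S / A) * ((2 - t) / (3 * (1 - t)\<^sup>2) * (- (1 / S)) * (A * (1 - t))
      + (- (A / (3 * S ^ 3))) * (A * (A + 1) - S\<^sup>2 / (1 - t))) = 1 + A / S\<^sup>2 * (A + 1)"
proof -
  have t: "t \<noteq> 1" using assms(3) by simp
  have w: "w \<noteq> 0 \<Longrightarrow> - 3 * (S / A) * ((2 - (1 - w)) / (3 * w\<^sup>2) * (- (1 / S)) * (A * w)) = (2 - (1 - w)) / w" for w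
    using assms by (simp add: field_simps power2_eq_square)
  have e1: "- 3 * (S / A) * ((2 - t) / (3 * (1 - t)\<^sup>2) * (- (1 / S)) * (A * (1 - t))) = (2 - t) / (1 - t)"
    using w[OF assms(3)] by simp
  have e2: "- 3 * (S / A) * ((- (A / (3 * S ^ 3))) * X) = X / S\<^sup>2" for X
    using assms by (simp add: field_simps power2_eq_square power3_eq_cube)
  have w3: "w \<noteq> 0 \<Longrightarrow> (2 - (1 - w)) / w + (A * (A + 1) - S\<^sup>2 / w) / S\<^sup>2 = 1 + A / S\<^sup>2 * (A + 1)" for w
    using assms by (simp add: field_simps power2_eq_square)
  have e3: "(2 - t) / (1 - t) + (A * (A + 1) - S\<^sup>2 / (1 - t)) / S\<^sup>2 = 1 + A / S\<^sup>2 * (A + 1)"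
    using w3[OF assms(3)] by simp
  show ?thesis by (simp only: distrib_left[of "- 3 * (S / A)"] e1 e2 e3)
qed

theorem lemma3p2:
  fixes p y :: "'a::euclidean_space" and R :: real and \<gamma> :: "real \<Rightarrow> 'a"
  assumes "norm p = 1"
    and "0 < R" "R < pi / 2"
    and "norm y = 1" "sdist p y = R"
    and "\<forall>s\<in>{R..pi}. norm (\<gamma> s) = 1"
    and "\<gamma> R = y" "\<gamma> pi = - p"
    and "\<forall>s\<in>{R..pi}. \<forall>t\<in>{R..pi}. sdist (\<gamma> s) (\<gamma> t) = \<bar>s - t\<bar>"
    and "\<forall>s\<in>{R..pi}. sdist p (\<gamma> s) = s"
  shows "\<forall>x. norm x = 1 \<and> sdist p x = R \<and> x \<noteq> y \<longrightarrow>
    (let h = (\<lambda>s. cos R / (sin R)\<^sup>2 * sin s);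
         Z = Psi y x + integral {R..pi} (\<lambda>s. h s *\<^sub>R Psi (\<gamma> s) x)
     in - 3 * tan R * (Z \<bullet> sgrad (sdist p) x) = 1 + integral {R..pi} h)"
proof (intro allI impI)
  note p = assms(1) and R0 = assms(2) and R1 = assms(3) and y = assms(4) and py0 = assms(5)
    and gn = assms(6) and gR = assms(7) and gd = assms(9) and gp0 = assms(10)
  fix x :: 'a assume H: "norm x = 1 \<and> sdist p x = R \<and> x \<noteq> y"
  then have x: "norm x = 1" and px0: "sdist p x = R" and xy: "x \<noteq> y" by auto
  define A where "A = cos R"
  define S where "S = sin R"
  have Rpi: "R \<le> pi" using R1 pi_gt_zero by linarith
  have A0: "A > 0" unfolding A_def using R0 R1 by (intro cos_gt_zero_pi) auto
  have S0: "S > 0" unfolding S_def using R0 R1 by (intro sin_gt_zero) auto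
  have AS: "A\<^sup>2 + S\<^sup>2 = 1" by (simp add: A_def S_def)
  have A1: "A < 1"
  proof -
    have "A\<^sup>2 < 1" using AS S0 by (smt (verit) zero_less_power)
    then show ?thesis using A0 by (smt (verit) one_le_power)
  qed
  have arc: "\<And>a b :: 'a. norm a = 1 \<Longrightarrow> norm b = 1 \<Longrightarrow> sdist a b = t \<Longrightarrow> a \<bullet> b = cos t" for t
  proof -
    fix a b :: 'a assume "norm a = 1" "norm b = 1" "sdist a b = t"
    moreover have "\<bar>a \<bullet> b\<bar> \<le> 1" using inner_abs_le1 calculation by blast
    ultimately show "a \<bullet> b = cos t" unfolding sdist_def by (metis abs_le_D1 abs_le_D2 cos_arccos minus_le_iff)
  qed
  have pp: "p \<bullet> p = 1" using p by (simp add: dot_square_norm)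
  have xx: "x \<bullet> x = 1" using x by (simp add: dot_square_norm)
  have yy: "y \<bullet> y = 1" using y by (simp add: dot_square_norm)
  have px: "p \<bullet> x = A" using arc[OF p x px0] by (simp add: A_def)
  have py: "p \<bullet> y = A" using arc[OF p y py0] by (simp add: A_def)
  have gp: "p \<bullet> \<gamma> s = cos s" if "s \<in> {R..pi}" for s
    using arc[OF p] gn gp0 that by blast
  have gy: "\<gamma> s \<bullet> y = cos (s - R)" if "s \<in> {R..pi}" for s
  proof -
    have "R \<in> {R..pi}" using Rpi by auto
    then have "sdist (\<gamma> s) (\<gamma> R) = \<bar>s - R\<bar>" using gd that by blast
    then have "sdist (\<gamma> s) y = s - R" using that gR by auto
    then show ?thesis using arc gn y that by blast
  qed
  define u where "u = (1 / S) *\<^sub>R (y - A *\<^sub>R p)"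
  have up: "u \<bullet> p = 0" using py by (simp add: u_def inner_diff_left pp inner_commute[of y p])
  have uu: "u \<bullet> u = 1"
  proof -
    have yp: "y \<bullet> p = A" using py by (simp add: inner_commute)
    have e: "(y - A *\<^sub>R p) \<bullet> (y - A *\<^sub>R p) = 1 - A\<^sup>2"
      using yp py pp yy by (simp add: inner_diff_left inner_diff_right power2_eq_square)
    have "u \<bullet> u = (1 / S)\<^sup>2 * ((y - A *\<^sub>R p) \<bullet> (y - A *\<^sub>R p))"
      by (simp add: u_def power2_eq_square)
    also have "\<dots> = 1" using AS S0 unfolding e by (simp add: field_simps)
    finally show ?thesis .
  qed
  have yform: "y = A *\<^sub>R p + S *\<^sub>R u" using S0 by (simp add: u_def)
  have gform: "\<gamma> s = cos s *\<^sub>R p + sin s *\<^sub>R u" if s: "s \<in> {R..pi}" for s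
  proof -
    have gg: "\<gamma> s \<bullet> \<gamma> s = 1" using gn s by (simp add: dot_square_norm)
    have gp': "\<gamma> s \<bullet> p = cos s" using gp[OF s] by (simp add: inner_commute)
    have gu: "\<gamma> s \<bullet> u = sin s"
    proof -
      have "\<gamma> s \<bullet> u = (1 / S) * (cos (s - R) - A * cos s)"
        using gy[OF s] gp' by (simp add: u_def inner_diff_right)
      also have "\<dots> = sin s" using S0 by (simp add: cos_diff A_def S_def field_simps)
      finally show ?thesis .
    qed
    have pg': "p \<bullet> \<gamma> s = cos s" using gp[OF s] .
    have ug: "u \<bullet> \<gamma> s = sin s" using gu by (simp add: inner_commute)
    have pu: "p \<bullet> u = 0" using up by (simp add: inner_commute)
    have "(norm (\<gamma> s - (cos s *\<^sub>R p + sin s *\<^sub>R u)))\<^sup>2 =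
       1 - 2 * (cos s * cos s) - 2 * (sin s * sin s) + cos s * cos s + sin s * sin s"
      unfolding power2_norm_eq_inner
      using gg gp' pg' gu ug pp uu up pu
      by (simp add: inner_diff_left inner_diff_right inner_add_left inner_add_right algebra_simps)
    also have "\<dots> = 0" using sin_cos_squared_add[of s] by (simp add: power2_eq_square)
    finally have "(norm (\<gamma> s - (cos s *\<^sub>R p + sin s *\<^sub>R u)))\<^sup>2 = 0" .
    then show ?thesis by simp
  qed
  define B where "B = u \<bullet> x"
  have gx: "\<gamma> s \<bullet> x = cc A B s" if s: "s \<in> {R..pi}" for s
    using gform[OF s] px by (simp add: cc_def B_def inner_add_left)
  have yx: "y \<bullet> x = A * A + S * B" by (simp add: yform inner_add_left px B_def)
  have cne1: "cc A B s \<noteq> 1" if s: "s \<in> {R..pi}" for s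
  proof
    assume "cc A B s = 1"
    then have "\<gamma> s \<bullet> x = 1" using gx[OF s] by simp
    then have "x = \<gamma> s" using inner1_eq gn s x by blast
    then have "s = R" using px0 gp0 s by auto
    then show False using \<open>x = \<gamma> s\<close> gR xy by simp
  qed
  have yx1: "1 - (A * A + B * S) \<noteq> 0"
  proof
    assume "1 - (A * A + B * S) = 0"
    then have "y \<bullet> x = 1" using yx by (simp add: algebra_simps)
    then show False using inner1_eq[OF y x] xy by simp
  qed
  have sqA: "sqrt (1 - A\<^sup>2) = S" using AS S0 by (metis add_diff_cancel_left' real_sqrt_unique less_imp_le)
  have gradp: "sgrad (sdist p) x = - (1 / S) *\<^sub>R (p - A *\<^sub>R x)"
    using sgrad_sdist[OF p x] px A0 A1 sqA by simp
  define gpx where "gpx = sgrad (sdist p) x"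
  have Psiy: "Psi y x \<bullet> gpx = (2 - (A*A + S*B)) / (3 * (1 - (A*A + S*B))\<^sup>2) * (- (1 / S)) * (A * (1 - (A*A + S*B)))"
  proof -
    have PF: "Psi y x = ((2 - y\<bullet>x) / (3 * (1 - y\<bullet>x)\<^sup>2)) *\<^sub>R (y - (y\<bullet>x) *\<^sub>R x)"
      using Psi_formula[OF y x xy] .
    have W: "(y - (y\<bullet>x) *\<^sub>R x) \<bullet> (p - A *\<^sub>R x) = A * (1 - y \<bullet> x)"
      using py px xx by (simp add: inner_diff_left inner_diff_right inner_commute[of y p] inner_commute[of x p] algebra_simps)
    have "Psi y x \<bullet> gpx = (2 - y\<bullet>x) / (3 * (1 - y\<bullet>x)\<^sup>2) * (- (1 / S)) * ((y - (y\<bullet>x) *\<^sub>R x) \<bullet> (p - A *\<^sub>R x))"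
      unfolding PF gpx_def gradp by simp
    then show ?thesis using W unfolding yx by simp
  qed
  define V where "V = (\<lambda>s. (A / S\<^sup>2 * sin s) *\<^sub>R (((2 - cc A B s) / (3 * (1 - cc A B s)\<^sup>2)) *\<^sub>R
      ((cos s *\<^sub>R p + sin s *\<^sub>R u) - cc A B s *\<^sub>R x)))"
  have Veq: "(cos R / (sin R)\<^sup>2 * sin s) *\<^sub>R Psi (\<gamma> s) x = V s" if s: "s \<in> {R..pi}" for s
  proof -
    have ne: "x \<noteq> \<gamma> s" using cne1[OF s] gx[OF s] xx by auto
    have gns: "norm (\<gamma> s) = 1" using gn s by auto
    have PF: "Psi (\<gamma> s) x = ((2 - \<gamma> s \<bullet> x) / (3 * (1 - \<gamma> s \<bullet> x)\<^sup>2)) *\<^sub>R (\<gamma> s - (\<gamma> s \<bullet> x) *\<^sub>R x)"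
      using Psi_formula[OF gns x ne] .
    show ?thesis
      unfolding PF gx[OF s] V_def A_def[symmetric] S_def[symmetric]
      by (subst gform[OF s]) (rule refl)
  qed
  have Vcont: "continuous_on {R..pi} V"
    unfolding V_def cc_def
    apply (intro continuous_intros)
    using cne1 S0 by (auto simp: cc_def)
  have Vint: "(V has_integral integral {R..pi} V) {R..pi}"
    using integrable_continuous_interval[OF Vcont] by blast
  have lin: "((\<lambda>s. V s \<bullet> gpx) has_integral (integral {R..pi} V \<bullet> gpx)) {R..pi}"
    using has_integral_linear[OF Vint bounded_linear_inner_left[of gpx]] by (simp add: o_def)
  define gf where "gf = (\<lambda>s. sin s*(cos s - A*cc A B s)*(2-cc A B s)/(1-cc A B s)\<^sup>2)"
  have D0: "A\<^sup>2 + B\<^sup>2 > 0" using A0 by (simp add: add_pos_nonneg)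
  have ftc: "(gf has_integral (FF A B pi - FF A B R)) {R..pi}"
  proof (rule fundamental_theorem_of_calculus)
    show "R \<le> pi" using Rpi by simp
    fix s assume s: "s \<in> {R..pi}"
    show "(FF A B has_vector_derivative gf s) (at s within {R..pi})"
      using antider[OF D0 cne1[OF s]] unfolding gf_def
      by (simp add: has_real_derivative_iff_has_vector_derivative[symmetric] has_field_derivative_at_within)
  qed
  have scal: "V s \<bullet> gpx = (- (A / (3 * S ^ 3))) * gf s" if s: "s \<in> {R..pi}" for s
  proof -
    have W: "((cos s *\<^sub>R p + sin s *\<^sub>R u) - cc A B s *\<^sub>R x) \<bullet> (p - A *\<^sub>R x) = cos s - A * cc A B s"
      using px xx pp up by (simp add: inner_diff_left inner_diff_right inner_add_left cc_def B_def
          inner_commute[of x p] inner_commute[of u p] algebra_simps)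
    have VV: "V s \<bullet> gpx = (A / S\<^sup>2 * sin s) * ((2 - cc A B s) / (3 * (1 - cc A B s)\<^sup>2)) * (- (1 / S))
       * (((cos s *\<^sub>R p + sin s *\<^sub>R u) - cc A B s *\<^sub>R x) \<bullet> (p - A *\<^sub>R x))"
      unfolding V_def gpx_def gradp by simp
    have gen: "\<And>b d c q. (A / S\<^sup>2 * b) * ((2 - c) / (3 * q)) * (- (1 / S)) * d = (- (A / (3 * S ^ 3))) * (b * d * (2 - c) / q)"
      using S0 by (simp add: field_simps power2_eq_square power3_eq_cube)
    show ?thesis unfolding VV W gen gf_def by simp
  qed
  have J: "integral {R..pi} V \<bullet> gpx = (- (A / (3 * S ^ 3))) * (FF A B pi - FF A B R)"
  proof -
    have "((\<lambda>s. V s \<bullet> gpx) has_integral (- (A / (3 * S ^ 3))) * (FF A B pi - FF A B R)) {R..pi}"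
      by (rule has_integral_eq[OF _ has_integral_mult_right[OF ftc]]) (simp add: scal)
    then show ?thesis using has_integral_unique[OF lin] by blast
  qed
  have dF: "FF A B pi - FF A B R = A*(A+1) - S\<^sup>2/(1-(A*A+B*S))"
    unfolding FF_def cc_def cos_pi sin_pi A_def[symmetric] S_def[symmetric]
    by (rule endpoint_alg[OF AS _ _ yx1]) (use D0 A0 in auto)
  have Ih: "integral {R..pi} (\<lambda>s. cos R / (sin R)\<^sup>2 * sin s) = A / S\<^sup>2 * (A + 1)"
  proof -
    have "(sin has_integral (- cos pi - (- cos R))) {R..pi}"
    proof (rule fundamental_theorem_of_calculus)
      show "R \<le> pi" using Rpi by simp
      fix s assume s: "s \<in> {R..pi}"
      show "((\<lambda>s. - cos s) has_vector_derivative sin s) (at s within {R..pi})"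
        by (auto intro!: derivative_eq_intros simp: has_real_derivative_iff_has_vector_derivative[symmetric])
    qed
    from has_integral_mult_right[OF this, of "cos R / (sin R)\<^sup>2"]
    have "integral {R..pi} (\<lambda>s. cos R / (sin R)\<^sup>2 * sin s) = cos R / (sin R)\<^sup>2 * (- cos pi - (- cos R))"
      by (rule integral_unique)
    then show ?thesis by (simp add: A_def S_def algebra_simps)
  qed
  have Ieq: "integral {R..pi} (\<lambda>s. (cos R / (sin R)\<^sup>2 * sin s) *\<^sub>R Psi (\<gamma> s) x) = integral {R..pi} V"
    by (rule integral_cong) (rule Veq)
  show "let h = (\<lambda>s. cos R / (sin R)\<^sup>2 * sin s);
         Z = Psi y x + integral {R..pi} (\<lambda>s. h s *\<^sub>R Psi (\<gamma> s) x)
     in - 3 * tan R * (Z \<bullet> sgrad (sdist p) x) = 1 + integral {R..pi} h"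
    unfolding Let_def Ieq Ih gpx_def[symmetric] inner_add_left J dF Psiy
    unfolding tan_def A_def[symmetric] S_def[symmetric]
    using final_alg2[of A S "A*A + S*B"] A0 S0 yx1 by (simp add: mult.commute)
qed
end
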